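(* Let $\tilde\Phi_N=[\tilde A\ \tilde B]$ be the regularized least-squares estimate and $\hat\Phi_N=[\hat A\ \hat B]$ the sparsified estimate described in the context, and let $\tilde\Delta_N=\Phi-\tilde\Phi_N$, $\Delta_N=\Phi-\hat\Phi_N$ with $\Phi=[A\ B]$. If $\|\tilde\Delta_N\|\le\varepsilon$ for some $\varepsilon>0$, then $\|\Delta_N\|\le\sqrt{\psi}\,\varepsilon$, where $\psi$ is the number of strongly connected components of the directed graph $\mathcal{G}(\mathcal{V},\mathcal{A})$.
   Context: Let $\mathcal{V}=[p]$ with block dimensions $n_i,m_i$, $n=\sum n_i$, $m=\sum m_i$. $A\in\mathbb{R}^{n\times n}$, $B\in\mathbb{R}^{n\times m}$ have blocks $A_{ij}\in\mathbb{R}^{n_i\times n_j}$, $B_{ij}\in\mathbb{R}^{n_i\times m_j}$ with $A_{ij}=0$, $B_{ij}=0$ whenever $j\notin\mathcal{N}_i$ for given sets $\mathcal{N}_i\subseteq\mathcal{V}$. $\mathcal{G}(\mathcal{V},\mathcal{A})$ is a directed graph without self loops whose edges carry delays $0$ or $1$; $D_{ij}$ is the minimum total delay over directed paths from $j$ to $i$ ($D_{ii}=0$, $D_{ij}=+\infty$ if there is no such path). It is assumed that $D_{ij}\le1$ for all $j\in\mathcal{N}_i$. Given a trajectory $x_0,\dots,x_N\in\mathbb{R}^n$, $u_0,\dots,u_{N-1}\in\mathbb{R}^m$ of $x_{t+1}=Ax_t+Bu_t+w_t$ and $\lambda>0$, with $z_t=[x_t^\top,u_t^\top]^\top$, $\tilde\Phi_N=\arg\min_{Y\in\mathbb{R}^{n\times(n+m)}}\{\lambda\|Y\|_F^2+\sum_{t=0}^{N-1}\|x_{t+1}-Yz_t\|^2\}$.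 $\hat A,\hat B$ are obtained from $\tilde A,\tilde B$ by setting the blocks $\hat A_{ij}$, $\hat B_{ij}$ to zero exactly for those $(i,j)$ with $D_{ij}=\infty$ (other blocks unchanged). $\|\cdot\|$ is the spectral norm. *)

theory Defs
  imports "HOL-Analysis.Analysis" "HOL-Library.Extended_Nat"
begin

text \<open>Graph G(V,Arcs) on V = {1..p}; an arc (j,i) in Arcs means an edge from j to i,
  carrying delay dl j i (0 or 1).\<close>

definition is_dpath :: "(nat \<times> nat) set \<Rightarrow> nat \<Rightarrow> nat \<Rightarrow> nat list \<Rightarrow> bool" where
  "is_dpath Arcs j i xs \<longleftrightarrow> xs \<noteq> [] \<and> hd xs = j \<and> last xs = i \<and> distinct xs
     \<and> (\<forall>k. Suc k < length xs \<longrightarrow> (xs ! k, xs ! Suc k) \<in> Arcs)"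

definition path_delay :: "(nat \<Rightarrow> nat \<Rightarrow> nat) \<Rightarrow> nat list \<Rightarrow> nat" where
  "path_delay dl xs = (\<Sum>k<length xs - 1. dl (xs ! k) (xs ! Suc k))"

definition min_delay :: "(nat \<times> nat) set \<Rightarrow> (nat \<Rightarrow> nat \<Rightarrow> nat) \<Rightarrow> nat \<Rightarrow> nat \<Rightarrow> enat" where
  "min_delay Arcs dl i j = Inf {enat (path_delay dl xs) | xs. is_dpath Arcs j i xs}"

definition num_scc :: "nat set \<Rightarrow> (nat \<times> nat) set \<Rightarrow> nat" where
  "num_scc V Arcs = card (V // {(a, b). a \<in> V \<and> b \<in> V \<and> (a, b) \<in> Arcs\<^sup>* \<and> (b, a) \<in> Arcs\<^sup>*})"

definition stack_vec :: "real^'n \<Rightarrow> real^'m \<Rightarrow> real^('n + 'm)" where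
  "stack_vec x u = (\<chi> k. case k of Inl c \<Rightarrow> x $ c | Inr c \<Rightarrow> u $ c)"

definition hcat :: "real^'n^'r \<Rightarrow> real^'m^'r \<Rightarrow> real^('n + 'm)^'r" where
  "hcat A B = (\<chi> r. \<chi> k. case k of Inl c \<Rightarrow> A $ r $ c | Inr c \<Rightarrow> B $ r $ c)"

definition frob_sq :: "real^'c^'r \<Rightarrow> real" where
  "frob_sq Y = (\<Sum>r\<in>UNIV. \<Sum>c\<in>UNIV. (Y $ r $ c)^2)"

definition spec_norm :: "real^'c^'r \<Rightarrow> real" where
  "spec_norm M = onorm (\<lambda>v. M *v v)"

definition rls_obj :: "real \<Rightarrow> nat \<Rightarrow> (nat \<Rightarrow> real^'n) \<Rightarrow> (nat \<Rightarrow> real^'m)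
   \<Rightarrow> real^('n + 'm)^'n \<Rightarrow> real" where
  "rls_obj lam N x u Y = lam * frob_sq Y + (\<Sum>t<N. (norm (x (Suc t) - Y *v stack_vec (x t) (u t)))^2)"

text \<open>Sparsification: zero the block (i,j) iff D_{ij} = infinity. State coordinate r lies
  in block bx r, input coordinate c lies in block bu c.\<close>
definition sparsify :: "(nat \<Rightarrow> nat \<Rightarrow> enat) \<Rightarrow> ('n::finite \<Rightarrow> nat) \<Rightarrow> ('m::finite \<Rightarrow> nat)
   \<Rightarrow> real^('n + 'm)^'n \<Rightarrow> real^('n + 'm)^'n" where
  "sparsify D bx bu M = (\<chi> r. \<chi> k.
     (let j = (case k of Inl c \<Rightarrow> bx c | Inr c \<Rightarrow> bu c)
      in if D (bx r) j = \<infinity> then 0 else M $ r $ k))"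

end

theory Submission
  imports Defs
begin

lemma dpath_rtrancl_aux:
  assumes "is_dpath Arcs j i xs"
  shows "k < length xs \<Longrightarrow> (j, xs ! k) \<in> Arcs\<^sup>*"
proof (induction k)
  case 0
  then show ?case using assms by (simp add: is_dpath_def hd_conv_nth)
next
  case (Suc k)
  then have "(xs ! k, xs ! Suc k) \<in> Arcs" using assms by (simp add: is_dpath_def)
  with Suc show ?case by (meson Suc_lessD rtrancl.rtrancl_into_rtrancl)
qed

lemma dpath_rtrancl:
  assumes "is_dpath Arcs j i xs"
  shows "(j, i) \<in> Arcs\<^sup>*"
proof -
  have "xs \<noteq> []" "last xs = i" using assms by (auto simp: is_dpath_def)
  then have "i = xs ! (length xs - 1)" "length xs - 1 < length xs"
    by (auto simp: last_conv_nth)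
  then show ?thesis using dpath_rtrancl_aux[OF assms] by metis
qed

lemma rtrancl_dpath:
  assumes "(j, i) \<in> Arcs\<^sup>*"
  shows "\<exists>xs. is_dpath Arcs j i xs"
  using assms
proof (induction rule: rtrancl_induct)
  case base
  show ?case by (rule exI[of _ "[j]"]) (simp add: is_dpath_def)
next
  case (step y z)
  then obtain xs where xs: "is_dpath Arcs j y xs" by blast
  show ?case
  proof (cases "z \<in> set xs")
    case True
    then obtain n where n: "n < length xs" "xs ! n = z" by (meson in_set_conv_nth)
    let ?ys = "take (Suc n) xs"
    have "is_dpath Arcs j z ?ys"
      using xs n unfolding is_dpath_def
      by (auto simp: hd_take last_conv_nth nth_take min_def) (subgoal_tac "length xs - Suc 0 = n", simp, linarith)
    then show ?thesis by blast
  next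
    case False
    have "is_dpath Arcs j z (xs @ [z])"
      unfolding is_dpath_def
    proof (intro conjI allI impI)
      fix k assume k: "Suc k < length (xs @ [z])"
      show "((xs @ [z]) ! k, (xs @ [z]) ! Suc k) \<in> Arcs"
      proof (cases "Suc k < length xs")
        case True then show ?thesis using xs by (simp add: is_dpath_def nth_append)
      next
        case f: False
        then have "k = length xs - 1" "Suc k = length xs" using k by auto
        moreover have "xs ! (length xs - 1) = y" "xs \<noteq> []" using xs by (auto simp: is_dpath_def last_conv_nth)
        ultimately show ?thesis using step(2) by (simp add: nth_append)
      qed
    qed (use xs False in \<open>auto simp: is_dpath_def\<close>)
    then show ?thesis by blast
  qed
qed

lemma min_delay_fin_iff:
  "min_delay Arcs dl i j \<noteq> \<infinity> \<longleftrightarrow> (j, i) \<in> Arcs\<^sup>*"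
proof
  assume h: "min_delay Arcs dl i j \<noteq> \<infinity>"
  show "(j, i) \<in> Arcs\<^sup>*"
  proof (rule ccontr)
    assume "(j, i) \<notin> Arcs\<^sup>*"
    then have "{enat (path_delay dl xs) | xs. is_dpath Arcs j i xs} = {}"
      using dpath_rtrancl by blast
    then show False using h by (simp add: min_delay_def top_enat_def)
  qed
next
  assume "(j, i) \<in> Arcs\<^sup>*"
  then obtain xs where "is_dpath Arcs j i xs" using rtrancl_dpath by blast
  then have "min_delay Arcs dl i j \<le> enat (path_delay dl xs)"
    unfolding min_delay_def by (intro Inf_lower) blast
  then show "min_delay Arcs dl i j \<noteq> \<infinity>" by (cases "min_delay Arcs dl i j") auto
qed


lemma norm_sq_vec: "(norm (x :: real^'k))^2 = (\<Sum>i\<in>UNIV. (x $ i)^2)"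
  by (simp add: norm_vec_def L2_set_def sum_nonneg)

theorem lemma5:
  fixes p :: nat
    and bx :: "'n::finite \<Rightarrow> nat" and bu :: "'m::finite \<Rightarrow> nat"
    and A :: "real^'n^'n" and B :: "real^'m^'n"
    and Nb :: "nat \<Rightarrow> nat set"
    and Arcs :: "(nat \<times> nat) set" and dl :: "nat \<Rightarrow> nat \<Rightarrow> nat"
    and N :: nat and x :: "nat \<Rightarrow> real^'n" and u :: "nat \<Rightarrow> real^'m"
    and w :: "nat \<Rightarrow> real^'n"
    and lam :: real and Phit :: "real^('n + 'm)^'n" and eps :: real
  assumes bx_range: "bx ` UNIV = {1..p}"
    and bu_range: "bu ` UNIV \<subseteq> {1..p}"
    and Nb_sub: "\<forall>i\<in>{1..p}. Nb i \<subseteq> {1..p}"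
    and A_sparse: "\<forall>r c. bx c \<notin> Nb (bx r) \<longrightarrow> A $ r $ c = 0"
    and B_sparse: "\<forall>r c. bu c \<notin> Nb (bx r) \<longrightarrow> B $ r $ c = 0"
    and arcs_V: "Arcs \<subseteq> {1..p} \<times> {1..p}"
    and no_loops: "\<forall>v. (v, v) \<notin> Arcs"
    and delays: "\<forall>(j, i)\<in>Arcs. dl j i \<in> {0, 1}"
    and nbr_delay: "\<forall>i\<in>{1..p}. \<forall>j\<in>Nb i. min_delay Arcs dl i j \<le> 1"
    and traj: "\<forall>t<N. x (Suc t) = A *v x t + B *v u t + w t"
    and lam_pos: "lam > 0"
    and rls: "\<forall>Y. rls_obj lam N x u Phit \<le> rls_obj lam N x u Y"
    and eps_pos: "eps > 0"
    and err: "spec_norm (hcat A B - Phit) \<le> eps"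
  shows "spec_norm (hcat A B - sparsify (min_delay Arcs dl) bx bu Phit)
           \<le> sqrt (real (num_scc {1..p} Arcs)) * eps"
proof -
  define V where "V = {1..p::nat}"
  define R where "R = {(a, b). a \<in> V \<and> b \<in> V \<and> (a, b) \<in> Arcs\<^sup>* \<and> (b, a) \<in> Arcs\<^sup>*}"
  define Q where "Q = V // R"
  define col where "col k = (case k of Inl c \<Rightarrow> bx c | Inr c \<Rightarrow> bu c)" for k :: "'n + 'm"
  define E where "E = hcat A B - Phit"
  define M where "M = hcat A B - sparsify (min_delay Arcs dl) bx bu Phit"
  define mk where "mk C j = (\<exists>i\<in>C. (j, i) \<in> Arcs\<^sup>*)" for C j
  define vC where "vC v C = (\<chi> k. if mk C (col k) then v $ k else 0)"
    for v :: "real^('n+'m)" and C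
  have bxV: "bx r \<in> V" for r using bx_range V_def by blast
  have eqv: "equiv V R"
    unfolding equiv_def refl_on_def sym_def trans_def R_def by (auto intro: rtrancl_trans)
  have finQ: "finite Q" unfolding Q_def
    by (rule finite_quotient) (auto simp: V_def R_def)
  have Mentry: "M $ r $ k = (if (col k, bx r) \<in> Arcs\<^sup>* then E $ r $ k else 0)" for r k
  proof (cases "(col k, bx r) \<in> Arcs\<^sup>*")
    case True
    then have "min_delay Arcs dl (bx r) (col k) \<noteq> \<infinity>" using min_delay_fin_iff by metis
    then show ?thesis using True
      by (cases k) (auto simp: M_def E_def sparsify_def col_def Let_def)
  next
    case False
    then have inf: "min_delay Arcs dl (bx r) (col k) = \<infinity>" using min_delay_fin_iff by metis
    have "col k \<notin> Nb (bx r)"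
    proof
      assume "col k \<in> Nb (bx r)"
      then have "min_delay Arcs dl (bx r) (col k) \<le> 1" using nbr_delay bxV V_def by blast
      with inf show False by simp
    qed
    then show ?thesis using False inf A_sparse B_sparse
      by (cases k) (auto simp: M_def E_def sparsify_def col_def Let_def hcat_def)
  qed
  have rowC: "(M *v v) $ r = (E *v vC v C) $ r" if C: "C \<in> Q" "bx r \<in> C" for v C r
  proof -
    have "(col k, bx r) \<in> Arcs\<^sup>* \<longleftrightarrow> mk C (col k)" for k
    proof
      assume "(col k, bx r) \<in> Arcs\<^sup>*" then show "mk C (col k)" using C mk_def by blast
    next
      assume "mk C (col k)"
      then obtain i where i: "i \<in> C" "(col k, i) \<in> Arcs\<^sup>*" using mk_def by blast
      then have "(i, bx r) \<in> R" using in_quotient_imp_in_rel[OF eqv] C Q_def by blast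
      then show "(col k, bx r) \<in> Arcs\<^sup>*" using i R_def by (auto intro: rtrancl_trans)
    qed
    then show ?thesis
      by (simp add: matrix_vector_mult_def Mentry vC_def) (intro sum.cong refl, simp)
  qed
  have Enorm: "norm (E *v y) \<le> eps * norm y" for y
  proof -
    have "norm (E *v y) \<le> onorm ((*v) E) * norm y" by (rule onorm) simp
    also have "\<dots> \<le> eps * norm y" using err
      by (intro mult_right_mono) (auto simp: spec_norm_def E_def)
    finally show ?thesis .
  qed
  have vCnorm: "norm (vC v C) \<le> norm v" for v C
    by (rule norm_le_componentwise_cart) (simp add: vC_def)
  have onecls: "(\<Sum>C\<in>Q. if bx r \<in> C then f else 0) = f" for r and f :: real
  proof -
    let ?C0 = "R `` {bx r}"
    have C0: "?C0 \<in> Q" using bxV Q_def quotientI by metis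
    have "bx r \<in> ?C0" using bxV[of r] by (simp add: R_def)
    then have "C \<in> Q \<Longrightarrow> (bx r \<in> C) = (C = ?C0)" for C
      using quotient_disj[OF eqv, of C ?C0] C0 Q_def by blast
    then have "(\<Sum>C\<in>Q. if bx r \<in> C then f else 0) = (\<Sum>C\<in>Q. if C = ?C0 then f else 0)"
      by (intro sum.cong) auto
    also have "\<dots> = f" using C0 finQ by simp
    finally show ?thesis .
  qed
  have sq: "(norm (M *v v))^2 \<le> real (card Q) * (eps * norm v)^2" for v
  proof -
    have "(norm (M *v v))^2 = (\<Sum>r\<in>UNIV. ((M *v v) $ r)^2)" by (rule norm_sq_vec)
    also have "\<dots> = (\<Sum>r\<in>UNIV. \<Sum>C\<in>Q. if bx r \<in> C then ((M *v v) $ r)^2 else 0)"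
      by (simp add: onecls)
    also have "\<dots> = (\<Sum>C\<in>Q. \<Sum>r\<in>UNIV. if bx r \<in> C then ((M *v v) $ r)^2 else 0)"
      by (rule sum.swap)
    also have "\<dots> = (\<Sum>C\<in>Q. \<Sum>r\<in>UNIV. if bx r \<in> C then ((E *v vC v C) $ r)^2 else 0)"
      by (intro sum.cong refl) (simp add: rowC)
    also have "\<dots> \<le> (\<Sum>C\<in>Q. \<Sum>r\<in>UNIV. ((E *v vC v C) $ r)^2)"
      by (intro sum_mono) auto
    also have "\<dots> = (\<Sum>C\<in>Q. (norm (E *v vC v C))^2)"
      by (simp add: norm_sq_vec)
    also have "\<dots> \<le> (\<Sum>C\<in>Q. (eps * norm v)^2)"
    proof (intro sum_mono power_mono)
      fix C
      show "norm (E *v vC v C) \<le> eps * norm v"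
        using Enorm[of "vC v C"] vCnorm[of v C] eps_pos
        by (meson mult_left_mono less_imp_le order_trans)
    qed simp
    also have "\<dots> = real (card Q) * (eps * norm v)^2" by simp
    finally show ?thesis .
  qed
  have "norm (M *v v) \<le> sqrt (real (card Q)) * eps * norm v" for v
  proof -
    have "norm (M *v v) = sqrt ((norm (M *v v))^2)" by simp
    also have "\<dots> \<le> sqrt (real (card Q) * (eps * norm v)^2)"
      using sq real_sqrt_le_mono by blast
    also have "\<dots> = sqrt (real (card Q)) * eps * norm v"
      using eps_pos by (simp add: real_sqrt_mult)
    finally show ?thesis .
  qed
  then have "onorm ((*v) M) \<le> sqrt (real (card Q)) * eps"
    by (intro onorm_le) (simp add: mult.assoc)
  then show ?thesis
    by (simp add: spec_norm_def M_def num_scc_def Q_def V_def R_def)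
qed

end
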